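(* For every $\vec\beta=(\beta_1,\beta_2,\beta_3)\in\mathbb R^3$ there exists a smooth, trace-free, divergence-free symmetric $(0,2)$-tensor $\sigma$ on $\mathbb R^3$ with compact support in $A_1=\{1<|x|<2\}$, satisfying $L\sigma=0$ and \[\int_{A_1}x^p\sum_{i,j,k}(\sigma_{ij,k})^2\,dx=\beta_p\quad(p=1,2,3).\]
   Context: Cartesian coordinates on $\mathbb R^3$ with Euclidean metric; commas denote partial derivatives; trace and divergence are Euclidean. $L\sigma=\sum_{i,j}(\sigma_{ij,ij}-\sigma_{ii,jj})$. *)

theory Defs
  imports "HOL-Analysis.Analysis"
begin

definition pd :: "'n::finite \<Rightarrow> (real^'n \<Rightarrow> real) \<Rightarrow> real^'n \<Rightarrow> real" where
  "pd k f x = deriv (\<lambda>t. f (x + t *\<^sub>R axis k 1)) 0"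

fun ipd :: "'n::finite list \<Rightarrow> (real^'n \<Rightarrow> real) \<Rightarrow> real^'n \<Rightarrow> real" where
  "ipd [] f = f"
| "ipd (k # ks) f = pd k (ipd ks f)"

definition smooth_fun :: "(real^'n::finite \<Rightarrow> real) \<Rightarrow> bool" where
  "smooth_fun f \<longleftrightarrow> (\<forall>ks. continuous_on UNIV (ipd ks f) \<and>
      (\<forall>k x. (\<lambda>t. ipd ks f (x + t *\<^sub>R axis k 1)) differentiable (at 0)))"

definition tsupport :: "('i \<Rightarrow> 'j \<Rightarrow> real^'n::finite \<Rightarrow> real) \<Rightarrow> (real^'n) set" where
  "tsupport \<sigma> = closure {x. \<exists>i j. \<sigma> i j x \<noteq> 0}"

definition A1 :: "(real^3) set" where
  "A1 = {x. 1 < norm x \<and> norm x < 2}"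

definition Lop :: "(3 \<Rightarrow> 3 \<Rightarrow> real^3 \<Rightarrow> real) \<Rightarrow> real^3 \<Rightarrow> real" where
  "Lop \<sigma> x = (\<Sum>i\<in>UNIV. \<Sum>j\<in>UNIV. pd j (pd i (\<sigma> i j)) x - pd j (pd j (\<sigma> i i)) x)"

end

theory Submission
  imports Defs "HOL-Computational_Algebra.Polynomial"
begin


lemma poly_exp_lim: "((\<lambda>u. poly p u * exp (-u)) \<longlongrightarrow> (0::real)) at_top"
proof -
  have eq: "(\<lambda>u. poly p u * exp (-u)) = (\<lambda>u. \<Sum>i\<le>degree p. coeff p i * (u ^ i / exp u))"
    by (auto simp: poly_altdef sum_distrib_right exp_minus field_simps sum_divide_distrib)
  show ?thesis unfolding eq
    by (intro tendsto_null_sum tendsto_mult_right_zero tendsto_power_div_exp_0)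
qed

fun Pp :: "nat \<Rightarrow> real poly" where
  "Pp 0 = 1" | "Pp (Suc n) = [:0,0,1:] * (Pp n - pderiv (Pp n))"

definition EE :: "nat \<Rightarrow> real \<Rightarrow> real" where
  "EE n s = (if s > 0 then poly (Pp n) (1/s) * exp (-1/s) else 0)"

lemma EE_deriv: "(EE n has_real_derivative EE (Suc n) s) (at s)"
proof (cases "s > 0")
  case True
  have "((\<lambda>s. poly (Pp n) (1/s) * exp (-1/s)) has_real_derivative
        poly (pderiv (Pp n)) (1/s) * (- 1/s^2) * exp (-1/s) + poly (Pp n) (1/s) * (exp (-1/s) * (1/s^2))) (at s)"
    using True
    by (auto intro!: derivative_eq_intros DERIV_chain2[OF poly_DERIV] simp: power2_eq_square field_simps)
  moreover have "poly (pderiv (Pp n)) (1/s) * (- 1/s^2) * exp (-1/s) + poly (Pp n) (1/s) * (exp (-1/s) * (1/s^2))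
     = EE (Suc n) s" using True by (simp add: EE_def algebra_simps power2_eq_square divide_simps)
  ultimately have "((\<lambda>s. poly (Pp n) (1/s) * exp (-1/s)) has_real_derivative EE (Suc n) s) (at s)" by simp
  then show ?thesis
    by (rule has_field_derivative_transform_within_open[where S="{0<..}"]) (use True in \<open>auto simp: EE_def\<close>)
next
  case False
  show ?thesis
  proof (cases "s < 0")
    case True
    have "((\<lambda>s. 0) has_real_derivative 0) (at s)" by simp
    then have "(EE n has_real_derivative 0) (at s)"
      by (rule has_field_derivative_transform_within_open[where S="{..<0}"]) (use True in \<open>auto simp: EE_def\<close>)
    then show ?thesis using True by (simp add: EE_def)
  next
    case False
    with \<open>\<not> s > 0\<close> have s0: "s = 0" by simp
    have "((\<lambda>y. (EE n y - EE n 0) / (y - 0)) \<longlongrightarrow> 0) (at 0)"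
    proof (rule filterlim_split_at_real)
      have "\<forall>\<^sub>F y in at_left (0::real). 0 = (EE n y - EE n 0) / (y - 0)"
        proof -
          have "eventually (\<lambda>y. y \<in> {-1<..<(0::real)}) (at_left 0)" by (rule eventually_at_left_real) simp
          then show ?thesis by eventually_elim (auto simp: EE_def)
        qed
      then show "((\<lambda>y. (EE n y - EE n 0) / (y - 0)) \<longlongrightarrow> 0) (at_left 0)"
        by (rule Lim_transform_eventually[OF tendsto_const])
    next
      have "((\<lambda>u. poly (Pp n * [:0,1:]) u * exp (-u)) \<longlongrightarrow> 0) at_top" by (rule poly_exp_lim)
      moreover have "\<forall>\<^sub>F u in at_top. poly (Pp n * [:0,1:]) u * exp (-u) = (EE n (inverse u) - EE n 0) / (inverse u - 0)"
        using eventually_gt_at_top[of "0::real"] by eventually_elim (auto simp: EE_def field_simps)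
      ultimately have "((\<lambda>u. (EE n (inverse u) - EE n 0) / (inverse u - 0)) \<longlongrightarrow> 0) at_top"
        by (rule Lim_transform_eventually)
      then show "((\<lambda>y. (EE n y - EE n 0) / (y - 0)) \<longlongrightarrow> 0) (at_right 0)"
        by (simp add: filterlim_at_right_to_top)
    qed
    then have "(EE n has_real_derivative 0) (at 0)" by (simp add: has_field_derivative_iff)
    then show ?thesis using s0 by (simp add: EE_def)
  qed
qed



lemma Suc_choose': "Suc n choose k = (n choose k) + (if k = 0 then 0 else (n choose (k-1)))"
  by (cases k) simp_all

lemma leibniz_deriv:
  fixes F H :: "nat \<Rightarrow> real \<Rightarrow> real"
  assumes F: "\<And>n t. (F n has_real_derivative F (Suc n) t) (at t)"
      and H: "\<And>n t. (H n has_real_derivative H (Suc n) t) (at t)"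
  shows "((\<lambda>t. \<Sum>i = 0..n. real (n choose i) * F i t * H (n-i) t) has_real_derivative
          (\<Sum>i = 0..Suc n. real (Suc n choose i) * F i t * H (Suc n - i) t)) (at t)"
proof -
  have sumeq: "(\<Sum>i = 0..n. real (n choose i) * (F (Suc i) t * H (n-i) t + F i t * H (Suc (n-i)) t)) =
            (\<Sum>i = 0..Suc n. real (Suc n choose i) * F i t * H (Suc n - i) t)"
  proof -
    have A: "(\<Sum>i = 0..Suc n. real (n choose i) * F i t * H (Suc n - i) t) = (\<Sum>i = 0..n. real (n choose i) * F i t * H (Suc (n - i)) t)"
      by (simp add: Suc_diff_le)
    have B: "(\<Sum>i = 0..Suc n. (if i = 0 then 0 else real (n choose (i-1))) * F i t * H (Suc n - i) t) = (\<Sum>i = 0..n. real (n choose i) * F (Suc i) t * H (n - i) t)"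
      by (subst sum.atLeast0_atMost_Suc_shift) simp
    have "(\<Sum>i = 0..Suc n. real (Suc n choose i) * F i t * H (Suc n - i) t) =
       (\<Sum>i = 0..Suc n. real (n choose i) * F i t * H (Suc n - i) t) + (\<Sum>i = 0..Suc n. (if i = 0 then 0 else real (n choose (i-1))) * F i t * H (Suc n - i) t)"
      unfolding sum.distrib[symmetric] by (rule sum.cong) (auto simp: Suc_choose' algebra_simps)
    then show ?thesis using A B by (simp add: algebra_simps sum.distrib)
  qed
  have "((\<lambda>t. \<Sum>i = 0..n. real (n choose i) * F i t * H (n-i) t) has_real_derivative
          (\<Sum>i = 0..n. real (n choose i) * (F (Suc i) t * H (n-i) t + F i t * H (Suc (n-i)) t))) (at t)"
  proof (rule DERIV_sum)
    fix i
    show "((\<lambda>t. real (n choose i) * F i t * H (n-i) t) has_real_derivative real (n choose i) * (F (Suc i) t * H (n-i) t + F i t * H (Suc (n-i)) t)) (at t)"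
    proof -
      have e1: "(\<lambda>t. real (n choose i) * F i t * H (n-i) t) = (\<lambda>t. real (n choose i) * (F i t * H (n-i) t))"
        by (simp add: mult.assoc)
      show ?thesis unfolding e1
        by (rule DERIV_cong[OF DERIV_cmult[OF DERIV_mult[OF F[of i t] H[of "n-i" t]]]]) (simp add: algebra_simps Suc_diff_le)
    qed
  qed
  then show ?thesis using sumeq by simp
qed

lemma EE_deriv_chain[derivative_intros]:
  "(g has_real_derivative g') (at x within s) \<Longrightarrow> ((\<lambda>x. EE n (g x)) has_real_derivative EE (Suc n) (g x) * g') (at x within s)"
  by (rule DERIV_chain2[OF EE_deriv])

definition rr :: real where "rr = 1/8"

definition Gb :: "nat \<Rightarrow> real \<Rightarrow> real" where
  "Gb n t = (\<Sum>i = 0..n. real (n choose i) * EE i (rr + t) * ((-1)^(n-i) * EE (n-i) (rr - t)))"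

lemma Gb_deriv: "(Gb n has_real_derivative Gb (Suc n) t) (at t)"
proof -
  have F: "((\<lambda>t. EE n (rr + t)) has_real_derivative EE (Suc n) (rr + t)) (at t)" for n t
    by (auto intro!: derivative_eq_intros)
  have H: "((\<lambda>t. (-1)^n * EE n (rr - t)) has_real_derivative (-1)^(Suc n) * EE (Suc n) (rr - t)) (at t)" for n t
    by (auto intro!: derivative_eq_intros)
  show ?thesis unfolding Gb_def
    using leibniz_deriv[of "\<lambda>n t. EE n (rr + t)" "\<lambda>n t. (-1)^n * EE n (rr - t)", OF F H] by (simp add: mult.assoc)
qed

lemma Gb_deriv_chain[derivative_intros]:
  "(g has_real_derivative g') (at x within s) \<Longrightarrow> ((\<lambda>x. Gb n (g x)) has_real_derivative Gb (Suc n) (g x) * g') (at x within s)"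
  by (rule DERIV_chain2[OF Gb_deriv])

lemma EE_nonpos: "s \<le> 0 \<Longrightarrow> EE n s = 0" by (simp add: EE_def)

lemma Gb_supp: "rr \<le> \<bar>t\<bar> \<Longrightarrow> Gb n t = 0"
  unfolding Gb_def by (rule sum.neutral) (auto simp: EE_nonpos abs_if split: if_splits)

lemma Gb_par: "Gb n (-t) = (-1)^n * Gb n t"
proof (induction n arbitrary: t)
  case 0
  then show ?case by (simp add: Gb_def)
next
  case (Suc n)
  have d1: "((\<lambda>t. Gb n (-t)) has_real_derivative - Gb (Suc n) (-t)) (at t)"
    by (auto intro!: derivative_eq_intros)
  have d2: "((\<lambda>t. Gb n (-t)) has_real_derivative (-1)^n * Gb (Suc n) t) (at t)"
    unfolding Suc.IH by (auto intro!: derivative_eq_intros Gb_deriv)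
  from DERIV_unique[OF d1 d2] show ?case by simp
qed

lemma Gb_nz: "Gb 0 0 \<noteq> 0"
  by (simp add: Gb_def EE_def rr_def)



lemma "(1::3) \<noteq> 2 \<and> (1::3) \<noteq> 3 \<and> (2::3) \<noteq> 3" by simp
lemma "(x + t *\<^sub>R axis (1::3) (1::real)) $ 2 = x $ 2" by (simp add: axis_def)
lemma "(x + t *\<^sub>R axis (1::3) (1::real)) $ 1 = x $ 1 + t" by (simp add: axis_def)
lemma "(vector [a,b,c] :: real^3) $ 2 = b" by simp

definition Dt :: "real^3 \<Rightarrow> nat \<Rightarrow> nat \<Rightarrow> nat \<Rightarrow> real^3 \<Rightarrow> real" where
  "Dt c a b d x = Gb a (x$1 - c$1) * Gb b (x$2 - c$2) * Gb d (x$3 - c$3)"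

type_synonym trm = "real \<times> (real^3) \<times> nat \<times> nat \<times> nat"

fun tev :: "trm \<Rightarrow> real^3 \<Rightarrow> real" where "tev (\<alpha>,c,a,b,d) x = \<alpha> * Dt c a b d x"

definition ev :: "trm list \<Rightarrow> real^3 \<Rightarrow> real" where "ev es x = (\<Sum>e\<leftarrow>es. tev e x)"

fun tsh :: "3 \<Rightarrow> trm \<Rightarrow> trm" where
  "tsh k (\<alpha>,c,a,b,d) = (if k = 1 then (\<alpha>,c,Suc a,b,d) else if k = 2 then (\<alpha>,c,a,Suc b,d) else (\<alpha>,c,a,b,Suc d))"

lemma tev_line_deriv:
  "((\<lambda>t. tev e (x + t *\<^sub>R axis k 1)) has_real_derivative tev (tsh k e) x) (at 0)"
proof -
  obtain \<alpha> c a b d where e: "e = (\<alpha>,c,a,b,d)" by (cases e) auto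
  consider "k = 1" | "k = 2" | "k = 3" using exhaust_3 by blast
  then show ?thesis
  proof cases
    case 1
    show ?thesis unfolding e 1 by (simp add: Dt_def axis_def) (auto intro!: derivative_eq_intros)
  next
    case 2
    show ?thesis unfolding e 2 by (simp add: Dt_def axis_def) (auto intro!: derivative_eq_intros)
  next
    case 3
    show ?thesis unfolding e 3 by (simp add: Dt_def axis_def) (auto intro!: derivative_eq_intros)
  qed
qed

lemma ev_Nil[simp]: "ev [] x = 0" and ev_Cons[simp]: "ev (e # es) x = tev e x + ev es x"
  by (simp_all add: ev_def)

lemma ev_append[simp]: "ev (xs @ ys) x = ev xs x + ev ys x" by (simp add: ev_def)

lemma ev_line_deriv:
  "((\<lambda>t. ev es (x + t *\<^sub>R axis k 1)) has_real_derivative ev (map (tsh k) es) x) (at 0)"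
  by (induction es) (auto intro!: DERIV_add tev_line_deriv)

lemma pd_ev: "pd k (ev es) = ev (map (tsh k) es)"
  by (rule ext) (simp add: pd_def DERIV_imp_deriv[OF ev_line_deriv])

definition shs :: "3 list \<Rightarrow> trm list \<Rightarrow> trm list" where
  "shs ks es = foldr (\<lambda>k es. map (tsh k) es) ks es"

lemma ipd_ev: "ipd ks (ev es) = ev (shs ks es)"
  by (induction ks) (simp_all add: shs_def pd_ev)

lemma Gb_cont[continuous_intros]: "continuous_on S f \<Longrightarrow> continuous_on S (\<lambda>x. Gb n (f x))"
  by (rule continuous_on_compose2[of UNIV "Gb n"]) (auto intro: DERIV_isCont[OF Gb_deriv] continuous_at_imp_continuous_on)

lemma tev_cont: "continuous_on UNIV (tev e)"
  by (cases e) (auto simp: Dt_def intro!: continuous_intros)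

lemma ev_cont: "continuous_on UNIV (ev es)"
proof (induction es)
  case Nil then show ?case by (simp add: ev_def)
next
  case (Cons e es)
  have "ev (e # es) = (\<lambda>x. tev e x + ev es x)" by auto
  then show ?case using continuous_on_add[OF tev_cont[of e] Cons.IH] by simp
qed

lemma smooth_ev: "smooth_fun (ev es)"
  unfolding smooth_fun_def ipd_ev
  using ev_cont ev_line_deriv real_differentiable_def by blast



definition T :: "real^3 \<Rightarrow> 3 \<Rightarrow> 3 \<Rightarrow> trm list" where
"T c i j = (if i = 1 \<and> j = 1 then [(-1,c,0,3,0),(-1,c,0,1,2)]
  else if i = 2 \<and> j = 2 then [(1,c,0,1,2),(-1,c,2,1,0)]
  else if i = 3 \<and> j = 3 then [(1,c,2,1,0),(1,c,0,3,0)]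
  else if (i = 1 \<and> j = 2) \<or> (i = 2 \<and> j = 1) then [(1,c,1,2,0),(1,c,1,0,2)]
  else if (i = 2 \<and> j = 3) \<or> (i = 3 \<and> j = 2) then [(-1,c,2,0,1),(-1,c,0,2,1)]
  else [])"

lemma T_sym: "T c i j = T c j i"
  using exhaust_3[of i] exhaust_3[of j] by (elim disjE) (simp_all add: T_def)

lemma T_trace: "(\<Sum>i\<in>UNIV. ev (T c i i) x) = 0"
  by (simp add: sum_3 T_def eval_nat_numeral)

lemma T_div: "(\<Sum>i\<in>UNIV. ev (map (tsh i) (T c i j)) x) = 0"
  using exhaust_3[of j] by (elim disjE) (simp_all add: sum_3 T_def eval_nat_numeral)

lemma T_L: "(\<Sum>i\<in>UNIV. \<Sum>j\<in>UNIV. ev (map (tsh j) (map (tsh i) (T c i j))) x - ev (map (tsh j) (map (tsh j) (T c i i))) x) = 0"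
  by (simp add: sum_3 T_def eval_nat_numeral)



fun scl :: "real \<Rightarrow> trm \<Rightarrow> trm" where "scl \<alpha> (\<beta>,c,a,b,d) = (\<alpha>*\<beta>,c,a,b,d)"

lemma tev_scl: "tev (scl \<alpha> e) x = \<alpha> * tev e x" by (cases e) auto
lemma tsh_scl: "tsh k (scl \<alpha> e) = scl \<alpha> (tsh k e)" by (cases e) auto
lemma ev_scl[simp]: "ev (map (scl \<alpha>) l) x = \<alpha> * ev l x"
  by (induction l) (auto simp: tev_scl algebra_simps)
lemma map_tsh_scl[simp]: "map (tsh k) (map (scl \<alpha>) l) = map (scl \<alpha>) (map (tsh k) l)"
  by (induction l) (auto simp: tsh_scl)

definition SS :: "(real \<times> (real^3)) list \<Rightarrow> 3 \<Rightarrow> 3 \<Rightarrow> trm list" where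
  "SS cs i j = concat (map (\<lambda>(\<alpha>,c). map (scl \<alpha>) (T c i j)) cs)"

lemma SS_Nil[simp]: "SS [] i j = []" by (simp add: SS_def)
lemma SS_Cons[simp]: "SS ((\<alpha>,c) # cs) i j = map (scl \<alpha>) (T c i j) @ SS cs i j" by (simp add: SS_def)

lemma SS_sym: "SS cs i j = SS cs j i"
  by (simp add: SS_def T_sym)

lemma SS_trace: "(\<Sum>i\<in>UNIV. ev (SS cs i i) x) = 0"
proof (induction cs)
  case (Cons ac cs)
  obtain \<alpha> c where ac: "ac = (\<alpha>,c)" by (cases ac)
  show ?case using Cons T_trace[of c x]
    by (simp add: ac sum.distrib sum_distrib_left[symmetric] del: map_map)
qed simp

lemma SS_div: "(\<Sum>i\<in>UNIV. pd i (ev (SS cs i j)) x) = 0"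
  unfolding pd_ev
proof (induction cs)
  case (Cons ac cs)
  obtain \<alpha> c where ac: "ac = (\<alpha>,c)" by (cases ac)
  show ?case using Cons T_div[of c j x]
    by (simp add: ac sum.distrib sum_distrib_left[symmetric] del: map_map)
qed simp

lemma SS_L: "Lop (\<lambda>i j. ev (SS cs i j)) x = 0"
  unfolding Lop_def pd_ev
proof (induction cs)
  case (Cons ac cs)
  obtain \<alpha> c where ac: "ac = (\<alpha>,c)" by (cases ac)
  have "(\<Sum>i\<in>UNIV. \<Sum>j\<in>UNIV. ev (map (tsh j) (map (tsh i) (SS (ac # cs) i j))) x -
          ev (map (tsh j) (map (tsh j) (SS (ac # cs) i i))) x)
     = \<alpha> * (\<Sum>i\<in>UNIV. \<Sum>j\<in>UNIV. ev (map (tsh j) (map (tsh i) (T c i j))) x - ev (map (tsh j) (map (tsh j) (T c i i))) x)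
       + (\<Sum>i\<in>UNIV. \<Sum>j\<in>UNIV. ev (map (tsh j) (map (tsh i) (SS cs i j))) x -
          ev (map (tsh j) (map (tsh j) (SS cs i i))) x)"
    by (simp add: ac sum.distrib sum_distrib_left algebra_simps sum_subtractf del: map_map)
  then show ?case using Cons T_L[of c x] by simp
qed simp

lemma SS_smooth: "smooth_fun (ev (SS cs i j))" by (rule smooth_ev)



lemma int_supp:
  fixes f :: "real^3 \<Rightarrow> real"
  assumes "continuous_on UNIV f" "\<And>x. x \<notin> cbox a b \<Longrightarrow> f x = 0"
  shows "(f has_integral integral (cbox a b) f) UNIV"
  by (rule has_integral_on_superset[OF _ assms(2)])
     (auto intro!: integrable_integral integrable_continuous continuous_on_subset[OF assms(1)])

lemma int_pos:
  fixes f :: "real^3 \<Rightarrow> real"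
  assumes cont: "continuous_on UNIV f" and nn: "\<And>x. f x \<ge> 0" and pos: "f x0 > 0"
    and int: "f integrable_on UNIV"
  shows "integral UNIV f > 0"
proof -
  obtain \<delta> where d: "\<delta> > 0" "\<And>y. dist y x0 < \<delta> \<Longrightarrow> dist (f y) (f x0) < f x0 / 2"
    using cont pos unfolding continuous_on_iff by (metis UNIV_I half_gt_zero)
  define e :: "real^3" where "e = (\<delta>/4) *\<^sub>R vec 1"
  define K where "K = cbox (x0 - e) (x0 + e)"
  have inK: "f y \<ge> f x0 / 2" if "y \<in> K" for y
  proof -
    have h: "\<bar>(y - x0)$i\<bar> \<le> \<delta>/4" for i
    proof -
      have "x0$i - \<delta>/4 \<le> y$i \<and> y$i \<le> x0$i + \<delta>/4" using that unfolding K_def mem_box_cart e_def by simp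
      then show ?thesis by (smt (verit) vector_minus_component)
    qed
    have "(\<Sum>i\<in>UNIV. \<bar>(y - x0)$i\<bar>) \<le> 3 * (\<delta>/4)"
      using h[of 1] h[of 2] h[of 3] unfolding sum_3 by linarith
    then have "dist y x0 < \<delta>" using norm_le_l1_cart[of "y - x0"] d(1) by (simp add: dist_norm)
    from d(2)[OF this] have "\<bar>f y - f x0\<bar> < f x0 / 2" by (simp add: dist_real_def)
    then show ?thesis using abs_ge_minus_self[of "f y - f x0"] by linarith
  qed
  have "x0 \<in> K" unfolding K_def mem_box_cart e_def using d(1) by simp
  then have Kne: "K \<noteq> {}" by auto
  have cK0: "Henstock_Kurzweil_Integration.content K = (\<Prod>i\<in>UNIV. (x0 + e)$i - (x0 - e)$i)"
    using content_cbox_cart[OF Kne[unfolded K_def]] by (simp add: K_def)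
  have cK: "Henstock_Kurzweil_Integration.content K > 0"
    unfolding cK0 e_def using d(1) by (intro prod_pos) simp
  have g: "((\<lambda>x. if x \<in> K then f x0 / 2 else 0) has_integral Henstock_Kurzweil_Integration.content K *\<^sub>R (f x0 / 2)) UNIV"
    unfolding has_integral_restrict_UNIV K_def by (rule has_integral_const)
  have "Henstock_Kurzweil_Integration.content K *\<^sub>R (f x0 / 2) \<le> integral UNIV f"
    by (rule has_integral_le[OF g integrable_integral[OF int]]) (use inK nn in \<open>auto simp del: K_def\<close>)
  moreover have "Henstock_Kurzweil_Integration.content K *\<^sub>R (f x0 / 2) > 0" using cK pos by simp
  ultimately show ?thesis by linarith
qed

definition cube :: "real^3 \<Rightarrow> (real^3) set" where
  "cube c = {x. \<bar>x$1 - c$1\<bar> < rr \<and> \<bar>x$2 - c$2\<bar> < rr \<and> \<bar>x$3 - c$3\<bar> < rr}"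

lemma Gb_nz_lt: "Gb n t \<noteq> 0 \<Longrightarrow> \<bar>t\<bar> < rr"
  using Gb_supp not_less by blast

lemma tev_nz: "tev e x \<noteq> 0 \<Longrightarrow> x \<in> cube (fst (snd e))"
  by (cases e) (auto simp: cube_def Dt_def intro: Gb_nz_lt)

lemma ev_nz: "\<forall>e\<in>set es. fst (snd e) = c \<Longrightarrow> ev es x \<noteq> 0 \<Longrightarrow> x \<in> cube c"
proof (induction es)
  case (Cons e es)
  then show ?case using tev_nz[of e x] by (cases "tev e x = 0") auto
qed simp

lemma T_ctr: "\<forall>e\<in>set (T c i j). fst (snd e) = c"
  using exhaust_3[of i] exhaust_3[of j] by (elim disjE) (simp_all add: T_def)
lemma tsh_ctr[simp]: "fst (snd (tsh k e)) = fst (snd e)" by (cases e) auto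

lemma SS_nz: "ev (SS cs i j) x \<noteq> 0 \<Longrightarrow> \<exists>(\<alpha>,c)\<in>set cs. x \<in> cube c"
proof (induction cs)
  case (Cons ac cs)
  obtain \<alpha> c where ac: "ac = (\<alpha>,c)" by (cases ac)
  show ?case
  proof (cases "ev (T c i j) x = 0")
    case True
    then have "ev (SS cs i j) x \<noteq> 0" using Cons.prems by (simp add: ac)
    with Cons.IH show ?thesis by auto
  next
    case False
    then have "x \<in> cube c" using ev_nz[OF T_ctr] by blast
    then show ?thesis by (intro bexI[of _ "(\<alpha>,c)"]) (simp_all add: ac)
  qed
qed simp

definition V :: "real^3 \<Rightarrow> 3 \<Rightarrow> 3 \<Rightarrow> 3 \<Rightarrow> real^3 \<Rightarrow> real" where
  "V c i j k x = ev (map (tsh k) (T c i j)) x"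

definition W :: "real^3 \<Rightarrow> real^3 \<Rightarrow> real" where
  "W c x = (\<Sum>i\<in>UNIV. \<Sum>j\<in>UNIV. \<Sum>k\<in>UNIV. (V c i j k x)\<^sup>2)"

lemma V_nz: "V c i j k x \<noteq> 0 \<Longrightarrow> x \<in> cube c"
  unfolding V_def by (rule ev_nz) (use T_ctr in auto)

lemma W_zero: assumes "x \<notin> cube c" shows "W c x = 0"
proof -
  have "V c i j k x = 0" for i j k using V_nz assms by blast
  then show ?thesis by (simp add: W_def)
qed

lemma W_nn: "W c x \<ge> 0" unfolding W_def by (intro sum_nonneg) auto

lemma ev_cont'[continuous_intros]: "continuous_on S (\<lambda>x. ev es x)"
  using ev_cont continuous_on_subset by blast

lemma W_cont: "continuous_on UNIV (W c)"
  unfolding W_def[abs_def] V_def by (intro continuous_intros)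

lemma Dt_refl: "Dt c a b d ((2::real) *\<^sub>R c - x) = (-1)^(a+b+d) * Dt c a b d x"
proof -
  have e: "((2::real) *\<^sub>R c - x)$k - c$k = -(x$k - c$k)" for k by simp
  show ?thesis unfolding Dt_def e Gb_par power_add by (simp only: mult_ac)
qed

fun deg :: "trm \<Rightarrow> nat" where "deg (\<alpha>,c,a,b,d) = a + b + d"

lemma tev_refl: "fst (snd e) = c \<Longrightarrow> tev e ((2::real) *\<^sub>R c - x) = (-1)^(deg e) * tev e x"
  by (cases e) (simp add: Dt_refl)

lemma ev_refl: "\<forall>e\<in>set es. fst (snd e) = c \<and> even (deg e) \<Longrightarrow> ev es ((2::real) *\<^sub>R c - x) = ev es x"
  by (induction es) (auto simp: tev_refl)

lemma T_deg: "\<forall>e\<in>set (T c i j). deg e = 3"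
  using exhaust_3[of i] exhaust_3[of j] by (elim disjE) (simp_all add: T_def)

lemma tsh_deg[simp]: "deg (tsh k e) = Suc (deg e)" by (cases e) auto

lemma V_refl: "V c i j k ((2::real) *\<^sub>R c - x) = V c i j k x"
  unfolding V_def by (rule ev_refl) (use T_deg T_ctr in auto)

lemma W_refl: "W c ((2::real) *\<^sub>R c - x) = W c x"
  by (simp add: W_def V_refl)



lemma W_cont'[continuous_intros]: "continuous_on S (W c)"
  using W_cont continuous_on_subset by blast

definition Bc :: "real^3 \<Rightarrow> (real^3) set" where "Bc c = cbox (c - 1) (c + 1)"

lemma cube_Bc': assumes "x \<in> cube c" shows "x \<in> Bc c"
proof -
  have "c$i - 1 \<le> x$i \<and> x$i \<le> c$i + 1" for i
  proof -
    have "\<bar>x$i - c$i\<bar> < 1/8" using assms exhaust_3[of i] unfolding cube_def rr_def by auto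
    then have "x$i - c$i < 1/8" "c$i - x$i < 1/8"
      using abs_ge_self[of "x$i - c$i"] abs_ge_minus_self[of "x$i - c$i"] by linarith+
    then show ?thesis by simp
  qed
  then show ?thesis unfolding Bc_def mem_box_cart by simp
qed

lemma cube_Bc: "x \<notin> Bc c \<Longrightarrow> x \<notin> cube c" using cube_Bc' by blast

lemma W_hasint: "(W c has_integral integral (Bc c) (W c)) UNIV"
  unfolding Bc_def by (rule int_supp) (use W_cont W_zero cube_Bc in \<open>auto simp: Bc_def\<close>)

lemma xW_hasint: "((\<lambda>x. (x$p - d) * W c x) has_integral integral (Bc c) (\<lambda>x. (x$p - d) * W c x)) UNIV"
  unfolding Bc_def by (rule int_supp) (auto intro!: continuous_intros  simp: W_zero cube_Bc Bc_def)

lemma Bc_image: "(\<lambda>x. - x + (2::real) *\<^sub>R c) ` Bc c = Bc c"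
proof
  show "(\<lambda>x. - x + (2::real) *\<^sub>R c) ` Bc c \<subseteq> Bc c"
  proof
    fix y assume "y \<in> (\<lambda>x. - x + (2::real) *\<^sub>R c) ` Bc c"
    then obtain x where x: "x \<in> Bc c" and y: "y = - x + (2::real) *\<^sub>R c" by blast
    have "c$i - 1 \<le> y$i \<and> y$i \<le> c$i + 1" for i
    proof -
      have "(c - 1)$i \<le> x$i \<and> x$i \<le> (c + 1)$i" using x unfolding Bc_def mem_box_cart by blast
      then show ?thesis unfolding y by simp
    qed
    then show "y \<in> Bc c" unfolding Bc_def mem_box_cart by simp
  qed
next
  show "Bc c \<subseteq> (\<lambda>x. - x + (2::real) *\<^sub>R c) ` Bc c"
  proof
    fix y assume y: "y \<in> Bc c"
    have "c$i - 1 \<le> (- y + (2::real) *\<^sub>R c)$i \<and> (- y + (2::real) *\<^sub>R c)$i \<le> c$i + 1" for i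
    proof -
      have "(c - 1)$i \<le> y$i \<and> y$i \<le> (c + 1)$i" using y unfolding Bc_def mem_box_cart by blast
      then show ?thesis by simp
    qed
    then have "- y + (2::real) *\<^sub>R c \<in> Bc c" unfolding Bc_def mem_box_cart by simp
    moreover have "y = - (- y + (2::real) *\<^sub>R c) + (2::real) *\<^sub>R c" by simp
    ultimately show "y \<in> (\<lambda>x. - x + (2::real) *\<^sub>R c) ` Bc c" by blast
  qed
qed

lemma Bc_image': "(-) ((2::real) *\<^sub>R c) ` Bc c = Bc c"
proof -
  have "(-) ((2::real) *\<^sub>R c) = (\<lambda>x. - x + (2::real) *\<^sub>R c)" by (auto simp: fun_eq_iff)
  then show ?thesis using Bc_image by simp
qed

lemma h_zero: "integral (Bc c) (\<lambda>x. (x$p - c$p) * W c x) = 0"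
proof -
  define h where "h = (\<lambda>x. (x$p - c$p) * W c x)"
  define I where "I = integral (Bc c) h"
  have hI: "(h has_integral I) (Bc c)"
    unfolding I_def h_def Bc_def
    by (rule integrable_integral, rule integrable_continuous) (auto intro!: continuous_intros )
  have "((\<lambda>x. h ((-1) *\<^sub>R x + (2 *\<^sub>R c))) has_integral (1 / (\<bar>-1\<bar> ^ DIM(real^3))) *\<^sub>R I)
          ((\<lambda>x. (1 / (-1)) *\<^sub>R x + -((1 / (-1)) *\<^sub>R (2 *\<^sub>R c))) ` Bc c)"
    using hI unfolding Bc_def by (intro has_integral_affinity) auto
  moreover have "(\<lambda>x. (1 / (-1::real)) *\<^sub>R x + -((1 / (-1)) *\<^sub>R (2 *\<^sub>R c))) = (\<lambda>x. - x + (2::real) *\<^sub>R c)"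
    by auto
  moreover have "h ((-1) *\<^sub>R x + (2 *\<^sub>R c)) = - h x" for x
  proof -
    have "(-1) *\<^sub>R x + (2 *\<^sub>R c) = (2::real) *\<^sub>R c - x" by simp
    then show ?thesis unfolding h_def by (simp add: W_refl algebra_simps)
  qed
  ultimately have "((\<lambda>x. - h x) has_integral I) (Bc c)" by (simp add: Bc_image')
  from has_integral_neg[OF this] have "(h has_integral - I) (Bc c)" by simp
  from has_integral_unique[OF hI this] have "I = - I" .
  then show ?thesis unfolding I_def h_def by simp
qed

lemma moment: "integral UNIV (\<lambda>x. x$p * W c x) = c$p * integral UNIV (W c)"
proof -
  have a: "((\<lambda>x. (x$p - c$p) * W c x) has_integral 0) UNIV"
    using xW_hasint[of p "c$p" c] h_zero by simp
  have b: "((\<lambda>x. c$p * W c x) has_integral c$p * integral (Bc c) (W c)) UNIV"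
    using has_integral_mult_right[OF W_hasint] by simp
  have "((\<lambda>x. x$p * W c x) has_integral 0 + c$p * integral (Bc c) (W c)) UNIV"
    using has_integral_add[OF a b] by (simp add: algebra_simps)
  moreover have "integral UNIV (W c) = integral (Bc c) (W c)" using W_hasint by (rule integral_unique)
  ultimately show ?thesis by (simp add: integral_unique)
qed

lemma Gb_ex: "\<exists>t. Gb n t \<noteq> 0"
proof (induction n)
  case 0 then show ?case using Gb_nz by blast
next
  case (Suc n)
  show ?case
  proof (rule ccontr)
    assume "\<not> ?case"
    then have z: "Gb (Suc n) t = 0" for t by blast
    have "\<forall>t. (Gb n has_real_derivative 0) (at t)"
    proof
      fix t show "(Gb n has_real_derivative 0) (at t)" using Gb_deriv[of n t] z[of t] by simp
    qed
    then have "Gb n t = Gb n 1" for t by (rule DERIV_isconst_all)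
    moreover have "Gb n 1 = 0" by (rule Gb_supp) (simp add: rr_def)
    ultimately show False using Suc by auto
  qed
qed

lemma Gb_pair: "\<exists>a b. Gb 2 a * Gb 0 b + Gb 0 a * Gb 2 b \<noteq> 0"
proof (rule ccontr)
  assume H: "\<not> ?thesis"
  obtain t where t: "Gb 2 t \<noteq> 0" using Gb_ex by blast
  have "Gb 2 0 * Gb 0 0 + Gb 0 0 * Gb 2 0 = 0" using H by blast
  then have z: "Gb 2 0 = 0" using Gb_nz by simp
  have "Gb 2 t * Gb 0 0 + Gb 0 t * Gb 2 0 = 0" using H by blast
  then show False using z t Gb_nz by simp
qed

lemma W_ge: "(V c 1 2 1 x)\<^sup>2 \<le> W c x"
proof -
  have "(V c 1 2 1 x)\<^sup>2 \<le> (\<Sum>k\<in>UNIV. (V c 1 2 k x)\<^sup>2)" by (rule member_le_sum) auto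
  also have "\<dots> \<le> (\<Sum>j\<in>UNIV. \<Sum>k\<in>UNIV. (V c 1 j k x)\<^sup>2)"
    by (rule member_le_sum[of 2 UNIV "\<lambda>j. \<Sum>k\<in>UNIV. (V c 1 j k x)\<^sup>2"]) (auto intro: sum_nonneg)
  also have "\<dots> \<le> W c x" unfolding W_def
    by (rule member_le_sum[of 1 UNIV "\<lambda>i. \<Sum>j\<in>UNIV. \<Sum>k\<in>UNIV. (V c i j k x)\<^sup>2"]) (auto intro!: sum_nonneg)
  finally show ?thesis .
qed

lemma W_pos: "integral UNIV (W c) > 0"
proof -
  obtain t where t: "Gb 2 t \<noteq> 0" using Gb_ex by blast
  obtain a b where ab: "Gb 2 a * Gb 0 b + Gb 0 a * Gb 2 b \<noteq> 0" using Gb_pair by blast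
  define x0 where "x0 = c + vector [t, a, b]"
  have "V c 1 2 1 x0 = Gb 2 t * (Gb 2 a * Gb 0 b + Gb 0 a * Gb 2 b)"
    by (simp add: V_def T_def x0_def Dt_def eval_nat_numeral algebra_simps)
  then have "V c 1 2 1 x0 \<noteq> 0" using t ab by simp
  then have "W c x0 > 0" using W_ge[of c x0] by (smt (verit) zero_less_power2)
  then show ?thesis
  proof -
    have "W c integrable_on UNIV" using W_hasint by blast
    from int_pos[OF W_cont W_nn \<open>W c x0 > 0\<close> this] show ?thesis .
  qed
qed



definition ctr :: "nat \<Rightarrow> real^3" where
  "ctr s = (if s = 0 then vector [3/2,0,0] else if s = 1 then vector [-3/2,0,0]
     else if s = 2 then vector [0,3/2,0] else if s = 3 then vector [0,-3/2,0]
     else if s = 4 then vector [0,0,3/2] else vector [0,0,-3/2])"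

lemma lt6: "s < (6::nat) \<Longrightarrow> s = 0 \<or> s = 1 \<or> s = 2 \<or> s = 3 \<or> s = 4 \<or> s = 5" by auto

lemma norm3: "norm (x::real^3) = sqrt ((x$1)\<^sup>2 + (x$2)\<^sup>2 + (x$3)\<^sup>2)"
  by (simp add: norm_vec_def L2_set_def sum_3)

lemma ctr_norm: "norm (ctr s) = 3/2"
proof -
  have "sqrt ((3/2::real)\<^sup>2) = 3/2" by simp
  then show ?thesis unfolding norm3 ctr_def by auto
qed

lemma ctr_sep: assumes "s < 6" "s' < 6" "s \<noteq> s'" shows
   "\<bar>ctr s $ 1 - ctr s' $ 1\<bar> + \<bar>ctr s $ 2 - ctr s' $ 2\<bar> + \<bar>ctr s $ 3 - ctr s' $ 3\<bar> \<ge> 1"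
  using lt6[OF assms(1)] lt6[OF assms(2)] assms(3) by (elim disjE) (simp_all add: ctr_def)

definition ccube :: "real^3 \<Rightarrow> (real^3) set" where
  "ccube c = {x. \<bar>x$1 - c$1\<bar> \<le> rr \<and> \<bar>x$2 - c$2\<bar> \<le> rr \<and> \<bar>x$3 - c$3\<bar> \<le> rr}"

lemma cube_ccube: "cube c \<subseteq> ccube c" unfolding cube_def ccube_def by auto

lemma ccube_closed: "closed (ccube c)"
  unfolding ccube_def by (intro closed_Collect_conj closed_Collect_le continuous_intros)

lemma ccube_A1: assumes "norm c = 3/2" shows "ccube c \<subseteq> A1"
proof
  fix x assume "x \<in> ccube c"
  then have "(\<Sum>i\<in>UNIV. \<bar>(x - c)$i\<bar>) \<le> 3/8" unfolding ccube_def rr_def sum_3 by simp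
  then have n: "norm (x - c) \<le> 3/8" using norm_le_l1_cart[of "x - c"] by linarith
  have "norm c \<le> norm x + norm (x - c)" using norm_triangle_ineq4[of x "x - c"] by simp
  moreover have "norm x \<le> norm c + norm (x - c)" using norm_triangle_ineq[of c "x - c"] by simp
  ultimately show "x \<in> A1" unfolding A1_def using n assms by auto
qed

lemma cube_disj: assumes "s < 6" "s' < 6" "s \<noteq> s'" "x \<in> cube (ctr s)" "x \<in> cube (ctr s')"
  shows False
proof -
  have "\<bar>ctr s $ k - ctr s' $ k\<bar> < 2 * rr" if "k = 1 \<or> k = 2 \<or> k = 3" for k
  proof -
    have "\<bar>x$k - ctr s $ k\<bar> < rr" "\<bar>x$k - ctr s' $ k\<bar> < rr" using assms(4,5) that unfolding cube_def by auto
    then show ?thesis by linarith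
  qed
  then have "\<bar>ctr s $ 1 - ctr s' $ 1\<bar> + \<bar>ctr s $ 2 - ctr s' $ 2\<bar> + \<bar>ctr s $ 3 - ctr s' $ 3\<bar> < 6 * rr"
    by (smt (verit))
  with ctr_sep[OF assms(1-3)] show False by (simp add: rr_def)
qed

lemma sq_sum_disj:
  fixes f :: "nat \<Rightarrow> real"
  assumes "finite I" "\<And>s s'. s \<in> I \<Longrightarrow> s' \<in> I \<Longrightarrow> s \<noteq> s' \<Longrightarrow> f s * f s' = 0"
  shows "(\<Sum>s\<in>I. f s)\<^sup>2 = (\<Sum>s\<in>I. (f s)\<^sup>2)"
proof -
  have "(\<Sum>s\<in>I. f s)\<^sup>2 = (\<Sum>s\<in>I. \<Sum>s'\<in>I. f s * f s')"
    by (simp add: power2_eq_square sum_product)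
  also have "\<dots> = (\<Sum>s\<in>I. (f s)\<^sup>2)"
  proof (rule sum.cong[OF refl])
    fix s assume s: "s \<in> I"
    have "(\<Sum>s'\<in>I. f s * f s') = f s * f s + (\<Sum>s'\<in>I - {s}. f s * f s')"
      using assms(1) s by (simp add: sum.remove)
    also have "(\<Sum>s'\<in>I - {s}. f s * f s') = 0" using assms(2) s by (intro sum.neutral) auto
    finally show "(\<Sum>s'\<in>I. f s * f s') = (f s)\<^sup>2" by (simp add: power2_eq_square)
  qed
  finally show ?thesis .
qed

lemma ev_map_SS: "ev (map (tsh k) (SS cs i j)) x = (\<Sum>(\<alpha>,c)\<leftarrow>cs. \<alpha> * V c i j k x)"
proof (induction cs)
  case (Cons ac cs)
  obtain \<alpha> c where ac: "ac = (\<alpha>,c)" by (cases ac)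
  show ?case using Cons by (simp add: ac V_def del: map_map)
qed simp



definition mm :: "nat \<Rightarrow> real" where "mm s = integral UNIV (W (ctr s))"

definition bp :: "real^3 \<Rightarrow> nat \<Rightarrow> real" where
  "bp \<beta> s = (if s = 0 then \<beta>$1 else if s = 1 then -\<beta>$1 else if s = 2 then \<beta>$2
      else if s = 3 then -\<beta>$2 else if s = 4 then \<beta>$3 else -\<beta>$3)"

definition al :: "real^3 \<Rightarrow> nat \<Rightarrow> real" where
  "al \<beta> s = sqrt (max (bp \<beta> s) 0 / (3/2 * mm s))"

definition csl :: "real^3 \<Rightarrow> (real \<times> (real^3)) list" where
  "csl \<beta> = map (\<lambda>s. (al \<beta> s, ctr s)) [0..<6]"

lemma mm_pos: "mm s > 0" unfolding mm_def by (rule W_pos)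

lemma pd_sig: "pd k (ev (SS (csl \<beta>) i j)) x = (\<Sum>s<6. al \<beta> s * V (ctr s) i j k x)"
proof -
  have "pd k (ev (SS (csl \<beta>) i j)) x = sum_list (map (\<lambda>s. al \<beta> s * V (ctr s) i j k x) [0..<6])"
    unfolding pd_ev ev_map_SS csl_def by (simp add: o_def)
  also have "\<dots> = (\<Sum>s<6. al \<beta> s * V (ctr s) i j k x)"
    by (simp add: sum_set_upt_conv_sum_list_nat[symmetric] atLeast0LessThan)
  finally show ?thesis .
qed

lemma nz_sig: "ev (SS (csl \<beta>) i j) x \<noteq> 0 \<Longrightarrow> \<exists>s<6. x \<in> cube (ctr s)"
  using SS_nz[of "csl \<beta>" i j x] unfolding csl_def by auto

lemma Phi_eq: "x$p * (\<Sum>i\<in>UNIV. \<Sum>j\<in>UNIV. \<Sum>k\<in>UNIV. (pd k (ev (SS (csl \<beta>) i j)) x)\<^sup>2)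
   = (\<Sum>s<6. (al \<beta> s)\<^sup>2 * (x$p * W (ctr s) x))"
proof -
  have sq: "(pd k (ev (SS (csl \<beta>) i j)) x)\<^sup>2 = (\<Sum>s<6. (al \<beta> s)\<^sup>2 * (V (ctr s) i j k x)\<^sup>2)" for i j k
  proof -
    have "(\<Sum>s<6. al \<beta> s * V (ctr s) i j k x)\<^sup>2 = (\<Sum>s<6. (al \<beta> s * V (ctr s) i j k x)\<^sup>2)"
    proof (rule sq_sum_disj)
      fix s s' :: nat assume "s \<in> {..<6}" "s' \<in> {..<6}" "s \<noteq> s'"
      then show "al \<beta> s * V (ctr s) i j k x * (al \<beta> s' * V (ctr s') i j k x) = 0"
        using cube_disj[of s s' x] V_nz by fastforce
    qed simp
    then show ?thesis unfolding pd_sig by (simp add: power_mult_distrib)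
  qed
  show ?thesis unfolding sq W_def
    by (simp add: sum_distrib_left sum.swap[of _ "{..<6::nat}"] algebra_simps)
qed

lemma xW_int: "((\<lambda>x. x$p * W c x) has_integral c$p * integral UNIV (W c)) UNIV"
proof -
  have "(\<lambda>x. x$p * W c x) integrable_on UNIV" using xW_hasint[of p 0 c] by auto
  then show ?thesis using moment[of p c] by (metis integrable_integral)
qed

lemma al_sq: "(al \<beta> s)\<^sup>2 = max (bp \<beta> s) 0 / (3/2 * mm s)"
  unfolding al_def using mm_pos[of s] by (simp add: real_sqrt_pow2)

lemma final_sum: "(\<Sum>s<6. (al \<beta> s)\<^sup>2 * (ctr s $ p * mm s)) = \<beta>$p"
proof -
  have t: "(al \<beta> s)\<^sup>2 * (ctr s $ p * mm s) = max (bp \<beta> s) 0 * ctr s $ p * (2/3)" for s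
    unfolding al_sq using mm_pos[of s] by (simp add: field_simps)
  have "(\<Sum>s<6. (al \<beta> s)\<^sup>2 * (ctr s $ p * mm s)) = (\<Sum>s<6. max (bp \<beta> s) 0 * ctr s $ p * (2/3))"
    by (rule sum.cong[OF refl t])
  also have "\<dots> = \<beta>$p"
    using exhaust_3[of p] by (elim disjE) (simp_all add: eval_nat_numeral ctr_def bp_def max_def)
  finally show ?thesis .
qed

lemma Phi_int: "((\<lambda>x. x$p * (\<Sum>i\<in>UNIV. \<Sum>j\<in>UNIV. \<Sum>k\<in>UNIV. (pd k (ev (SS (csl \<beta>) i j)) x)\<^sup>2)) has_integral \<beta>$p) UNIV"
proof -
  have "((\<lambda>x. \<Sum>s<6. (al \<beta> s)\<^sup>2 * (x$p * W (ctr s) x)) has_integral (\<Sum>s<6. (al \<beta> s)\<^sup>2 * (ctr s $ p * mm s))) UNIV"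
    unfolding mm_def by (intro has_integral_sum has_integral_mult_right xW_int) auto
  then show ?thesis unfolding Phi_eq final_sum .
qed

lemma Phi_zero: "x \<notin> A1 \<Longrightarrow> x$p * (\<Sum>i\<in>UNIV. \<Sum>j\<in>UNIV. \<Sum>k\<in>UNIV. (pd k (ev (SS (csl \<beta>) i j)) x)\<^sup>2) = 0"
proof -
  assume x: "x \<notin> A1"
  have "x \<notin> cube (ctr s)" for s using cube_ccube ccube_A1[OF ctr_norm[of s]] x by blast
  then have "W (ctr s) x = 0" for s by (rule W_zero)
  then show ?thesis unfolding Phi_eq by simp
qed

lemma supp_sub: "tsupport (\<lambda>i j. ev (SS (csl \<beta>) i j)) \<subseteq> A1"
proof -
  define K where "K = (\<Union>s<6. ccube (ctr s))"
  have "closed K" unfolding K_def using ccube_closed by (intro closed_UN) auto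
  moreover have "{x. \<exists>i j. ev (SS (csl \<beta>) i j) x \<noteq> 0} \<subseteq> K"
    unfolding K_def using nz_sig cube_ccube by blast
  ultimately have "tsupport (\<lambda>i j. ev (SS (csl \<beta>) i j)) \<subseteq> K"
    unfolding tsupport_def by (rule closure_minimal[rotated])
  moreover have "K \<subseteq> A1" unfolding K_def using ccube_A1[OF ctr_norm] by blast
  ultimately show ?thesis by blast
qed

lemma A1_bounded: "bounded A1"
  unfolding A1_def bounded_iff by (intro exI[of _ 2]) auto

theorem theorem2p8:
  fixes \<beta> :: "real^3"
  shows "\<exists>\<sigma> :: 3 \<Rightarrow> 3 \<Rightarrow> real^3 \<Rightarrow> real.
     (\<forall>i j. smooth_fun (\<sigma> i j)) \<and>
     (\<forall>i j x. \<sigma> i j x = \<sigma> j i x) \<and>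
     (\<forall>x. (\<Sum>i\<in>UNIV. \<sigma> i i x) = 0) \<and>
     (\<forall>j x. (\<Sum>i\<in>UNIV. pd i (\<sigma> i j) x) = 0) \<and>
     compact (tsupport \<sigma>) \<and> tsupport \<sigma> \<subseteq> A1 \<and>
     (\<forall>x. Lop \<sigma> x = 0) \<and>
     (\<forall>p. integral A1 (\<lambda>x. x $ p * (\<Sum>i\<in>UNIV. \<Sum>j\<in>UNIV. \<Sum>k\<in>UNIV. (pd k (\<sigma> i j) x)\<^sup>2)) = \<beta> $ p)"
proof (intro exI[of _ "\<lambda>i j. ev (SS (csl \<beta>) i j)"] conjI allI)
  show "smooth_fun (ev (SS (csl \<beta>) i j))" for i j by (rule smooth_ev)
  show "ev (SS (csl \<beta>) i j) x = ev (SS (csl \<beta>) j i) x" for i j x by (simp add: SS_sym[of _ i j])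
  show "(\<Sum>i\<in>UNIV. ev (SS (csl \<beta>) i i) x) = 0" for x by (rule SS_trace)
  show "(\<Sum>i\<in>UNIV. pd i (ev (SS (csl \<beta>) i j)) x) = 0" for j x by (rule SS_div)
  show "tsupport (\<lambda>i j. ev (SS (csl \<beta>) i j)) \<subseteq> A1" by (rule supp_sub)
  then show "compact (tsupport (\<lambda>i j. ev (SS (csl \<beta>) i j)))"
    unfolding compact_eq_bounded_closed
    using bounded_subset[OF A1_bounded] by (auto simp: tsupport_def)
  show "Lop (\<lambda>i j. ev (SS (csl \<beta>) i j)) x = 0" for x by (rule SS_L)
  show "integral A1 (\<lambda>x. x $ p * (\<Sum>i\<in>UNIV. \<Sum>j\<in>UNIV. \<Sum>k\<in>UNIV. (pd k (ev (SS (csl \<beta>) i j)) x)\<^sup>2)) = \<beta> $ p" for p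
  proof -
    let ?F = "\<lambda>x. x $ p * (\<Sum>i\<in>UNIV. \<Sum>j\<in>UNIV. \<Sum>k\<in>UNIV. (pd k (ev (SS (csl \<beta>) i j)) x)\<^sup>2)"
    have "(\<lambda>x. if x \<in> A1 then ?F x else 0) = ?F" using Phi_zero by (auto simp: fun_eq_iff)
    then have "integral A1 ?F = integral UNIV ?F" using integral_restrict_UNIV[of A1 ?F] by simp
    also have "\<dots> = \<beta>$p" using Phi_int by (rule integral_unique)
    finally show ?thesis .
  qed
qed


end
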